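(* Let a gyrocircle in the Einstein gyrovector space $\mathbb{R}^n_s$ be given, and let $P$ be a point exterior to it (in its gyroplane). Suppose two gyrosecants of the gyrocircle drawn from $P$ meet the gyrocircle at the points $A_2,A_3$ and at the points $B_2,B_3$, respectively. Then $$\frac{\gamma_{|PA_2|}|PA_2|\,\gamma_{|PA_3|}|PA_3|}{\gamma_{|A_2A_3|}+1}=\frac{\gamma_{|PB_2|}|PB_2|\,\gamma_{|PB_3|}|PB_3|}{\gamma_{|B_2B_3|}+1},$$ where $|XY|=\|\ominus X\oplus Y\|$ denotes gyrodistance and $\gamma_a=(1-a^2/s^2)^{-1/2}$.
   Context: Fix $s>0$, $n\ge2$; $\mathbb{R}^n_s=\{v\in\mathbb{R}^n:\|v\|<s\}$ with Einstein addition $u\oplus v=\frac{1}{1+u\cdot v/s^2}\{u+\frac{1}{\gamma_u}v+\frac{1}{s^2}\frac{\gamma_u}{1+\gamma_u}(u\cdot v)u\}$, $\gamma_v=(1-\|v\|^2/s^2)^{-1/2}$, $\ominus v=-v$. Gyrolines are intersections of Euclidean lines with the ball. A gyroplane is $(A_1\oplus\mathrm{span}\{\ominus A_1\oplus A_2,\ominus A_1\oplus A_3\})\cap\mathbb{R}^n_s$ for $\ominus A_1\oplus A_2,\ominus A_1\oplus A_3$ linearly independent; a gyrocircle with gyrocenter $O$ and gyroradius $r>0$ is the set of points of a gyroplane containing $O$ at gyrodistance $r$ from $O$; its exterior consists of points of that gyroplane at gyrodistance $>r$ from $O$. A gyrosecant is a gyroline meeting the gyrocircle in two different points. *)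

theory Defs
  imports "HOL-Analysis.Analysis"
begin

text \<open>The Einstein gyrovector space R^n_s, with points modelled as vectors of type real^'n.\<close>

definition eball :: "real \<Rightarrow> ('a::real_inner) set" where
  "eball s = {v. norm v < s}"

definition gam :: "real \<Rightarrow> real \<Rightarrow> real" where
  "gam s a = 1 / sqrt (1 - a\<^sup>2 / s\<^sup>2)"

definition gamv :: "real \<Rightarrow> 'a::real_inner \<Rightarrow> real" where
  "gamv s v = gam s (norm v)"

definition eadd :: "real \<Rightarrow> 'a::real_inner \<Rightarrow> 'a \<Rightarrow> 'a" where
  "eadd s u v = (1 / (1 + (u \<bullet> v) / s\<^sup>2)) *\<^sub>R
     (u + (1 / gamv s u) *\<^sub>R v + ((1 / s\<^sup>2) * (gamv s u / (1 + gamv s u)) * (u \<bullet> v)) *\<^sub>R u)"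

definition eminus :: "'a::real_inner \<Rightarrow> 'a" where
  "eminus v = - v"

definition gdist :: "real \<Rightarrow> 'a::real_inner \<Rightarrow> 'a \<Rightarrow> real" where
  "gdist s X Y = norm (eadd s (eminus X) Y)"

definition gyroline :: "real \<Rightarrow> ('a::real_inner) set \<Rightarrow> bool" where
  "gyroline s L \<longleftrightarrow> (\<exists>a b. a \<noteq> b \<and> L = {a + t *\<^sub>R (b - a) | t. True} \<inter> eball s)"

definition gyroplane_through :: "real \<Rightarrow> 'a::real_inner \<Rightarrow> 'a \<Rightarrow> 'a \<Rightarrow> 'a set" where
  "gyroplane_through s A1 A2 A3 =
     {eadd s A1 v | v. v \<in> span {eadd s (eminus A1) A2, eadd s (eminus A1) A3} \<inter> eball s}
     \<inter> eball s"

definition gyroplane :: "real \<Rightarrow> ('a::real_inner) set \<Rightarrow> bool" where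
  "gyroplane s G \<longleftrightarrow> (\<exists>A1 A2 A3. A1 \<in> eball s \<and> A2 \<in> eball s \<and> A3 \<in> eball s \<and>
      independent {eadd s (eminus A1) A2, eadd s (eminus A1) A3} \<and>
      eadd s (eminus A1) A2 \<noteq> eadd s (eminus A1) A3 \<and>
      G = gyroplane_through s A1 A2 A3)"

definition gyrocircle :: "real \<Rightarrow> 'a::real_inner set \<Rightarrow> 'a \<Rightarrow> real \<Rightarrow> 'a set" where
  "gyrocircle s G C r = {X \<in> G. gdist s C X = r}"

definition gyrocircle_exterior :: "real \<Rightarrow> 'a::real_inner set \<Rightarrow> 'a \<Rightarrow> real \<Rightarrow> 'a set" where
  "gyrocircle_exterior s G C r = {X \<in> G. gdist s C X > r}"

end

theory Submission imports Defs begin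

definition wf :: "real \<Rightarrow> 'a::real_inner \<Rightarrow> real" where
  "wf s X = sqrt (1 - (X \<bullet> X)/s\<^sup>2)"

lemma wf_facts:
  fixes X :: "'a::real_inner"
  assumes "s > 0" "norm X < s"
  shows "wf s X > 0" "(wf s X)\<^sup>2 = 1 - (X \<bullet> X)/s\<^sup>2"
proof -
  have "X \<bullet> X = (norm X)\<^sup>2" by (simp add: power2_norm_eq_inner)
  also have "\<dots> < s\<^sup>2" using assms by (simp add: power_strict_mono)
  finally have "(X \<bullet> X)/s\<^sup>2 < 1" using assms by simp
  then show "wf s X > 0" "(wf s X)\<^sup>2 = 1 - (X \<bullet> X)/s\<^sup>2" unfolding wf_def by auto
qed

lemma inner_pos:
  fixes X Y :: "'a::real_inner"
  assumes "s > 0" "norm X < s" "norm Y < s"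
  shows "1 - (X \<bullet> Y)/s\<^sup>2 > 0"
proof -
  have "X \<bullet> Y \<le> norm X * norm Y" by (rule norm_cauchy_schwarz)
  also have "\<dots> < s * s" using assms
    by (meson mult_strict_mono' norm_ge_zero)
  finally show ?thesis using assms by (simp add: power2_eq_square)
qed

lemma eadd_norm2:
  fixes u v :: "'a::real_inner"
  assumes s: "s > 0" and u: "norm u < s" and v: "norm v < s"
  shows "(norm (eadd s u v))\<^sup>2 =
     s\<^sup>2 * (1 - (wf s u)\<^sup>2 * (wf s v)\<^sup>2 / (1 + (u \<bullet> v)/s\<^sup>2)\<^sup>2)"
proof -
  define w where "w = wf s u"
  define a where "a = u \<bullet> u"
  define b where "b = u \<bullet> v"
  define c where "c = v \<bullet> v"
  have w0: "w > 0" and w2: "w\<^sup>2 = 1 - a/s\<^sup>2" using wf_facts[OF s u] by (auto simp: w_def a_def)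
  have wv2: "(wf s v)\<^sup>2 = 1 - c/s\<^sup>2" using wf_facts[OF s v] by (auto simp: c_def)
  have L: "1 + b/s\<^sup>2 > 0" using inner_pos[OF s, of "-u" v] u v by (simp add: b_def)
  have g: "gamv s u = 1 / w"
    by (simp add: gamv_def gam_def w_def wf_def power2_norm_eq_inner)
  define h where "h = b / (s\<^sup>2 * (1 + w))"
  have hh: "(1 / s\<^sup>2) * (gamv s u / (1 + gamv s u)) * b = h"
    using w0 s by (simp add: g h_def field_simps)
  have e: "eadd s u v = (1 / (1 + b / s\<^sup>2)) *\<^sub>R ((1 + h) *\<^sub>R u + w *\<^sub>R v)"
    unfolding eadd_def using hh[unfolded b_def] g
    by (simp add: b_def algebra_simps)
  have n: "(norm ((1 + h) *\<^sub>R u + w *\<^sub>R v))\<^sup>2 = (1+h)\<^sup>2 * a + 2*(1+h)*w*b + w\<^sup>2 * c"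
    unfolding power2_norm_eq_inner
    by (simp add: inner_add_left inner_add_right a_def b_def c_def
        inner_commute algebra_simps power2_eq_square)
  have as: "a = s\<^sup>2 * (1 - w\<^sup>2)" using w2 s by (simp add: field_simps)
  have den: "s\<^sup>2*(1+w) \<noteq> 0" using s w0 by simp
  have "h * a = (b * (1 - w)) * (s\<^sup>2*(1+w)) / (s\<^sup>2*(1+w))"
    unfolding h_def as by (simp add: power2_eq_square algebra_simps)
  then have ha: "h * a = b * (1 - w)" using den by simp
  have "h * (1 + w) = (b / s\<^sup>2) * ((1+w)/(1+w))"
    unfolding h_def by simp
  then have hw: "h * (1 + w) = b / s\<^sup>2" using w0 by simp
  have "(1+h)\<^sup>2 * a + 2*(1+h)*w*b = a + 2*(h*a) + h*(h*a) + 2*w*b + 2*b*h*w"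
    by (simp add: power2_eq_square algebra_simps)
  also have "\<dots> = a + 2*b + b * (h * (1 + w))" unfolding ha by (simp add: algebra_simps)
  finally have key: "(1+h)\<^sup>2 * a + 2*(1+h)*w*b = a + 2*b + b\<^sup>2/s\<^sup>2"
    unfolding hw by (simp add: power2_eq_square)
  have "(norm (eadd s u v))\<^sup>2 = ((1+h)\<^sup>2 * a + 2*(1+h)*w*b + w\<^sup>2 * c) / (1 + b/s\<^sup>2)\<^sup>2"
    using L by (simp add: e n power_divide abs_of_pos)
  also have "\<dots> = (a + 2*b + b\<^sup>2/s\<^sup>2 + w\<^sup>2 * c) / (1 + b/s\<^sup>2)\<^sup>2" using key by simp
  also have "\<dots> = (s\<^sup>2 * (1 + b/s\<^sup>2)\<^sup>2 - s\<^sup>2 * (w\<^sup>2 * (1 - c/s\<^sup>2))) / (1 + b/s\<^sup>2)\<^sup>2"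
  proof -
    have "a + 2*b + b\<^sup>2/s\<^sup>2 + w\<^sup>2 * c = s\<^sup>2 * (1 + b/s\<^sup>2)\<^sup>2 - s\<^sup>2 * (w\<^sup>2 * (1 - c/s\<^sup>2))"
      using s unfolding as by (simp add: field_simps power2_eq_square)
    then show ?thesis by simp
  qed
  also have "\<dots> = s\<^sup>2 * (1 - w\<^sup>2 * (1 - c/s\<^sup>2) / (1 + b/s\<^sup>2)\<^sup>2)"
    using L by (simp add: diff_divide_distrib right_diff_distrib)
  finally show ?thesis by (simp add: w_def wv2 b_def)
qed

definition EE :: "real \<Rightarrow> 'a::real_inner \<Rightarrow> 'a \<Rightarrow> real" where
  "EE s X Y = (1 - (X \<bullet> Y)/s\<^sup>2) / (wf s X * wf s Y)"

lemma gdist_facts: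
  fixes X Y :: "'a::real_inner"
  assumes s: "s > 0" and X: "norm X < s" and Y: "norm Y < s"
  shows "gdist s X Y < s" "gam s (gdist s X Y) = EE s X Y"
proof -
  define W where "W = wf s X * wf s Y"
  define L where "L = 1 - (X \<bullet> Y)/s\<^sup>2"
  have W0: "W > 0" using wf_facts[OF s X] wf_facts[OF s Y] by (simp add: W_def)
  have L0: "L > 0" using inner_pos[OF s X Y] by (simp add: L_def)
  have wm: "wf s (-X) = wf s X" by (simp add: wf_def)
  have g2: "(gdist s X Y)\<^sup>2 = s\<^sup>2 * (1 - W\<^sup>2 / L\<^sup>2)"
    using eadd_norm2[OF s, of "-X" Y] X Y
    by (simp add: gdist_def eminus_def wm W_def L_def power_mult_distrib)
  have q: "1 - (gdist s X Y)\<^sup>2 / s\<^sup>2 = (W / L)\<^sup>2"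
    using g2 s by (simp add: power_divide)
  have "(gdist s X Y)\<^sup>2 < s\<^sup>2" using g2 s W0 L0 by (simp add: mult_less_cancel_left1)
  then show "gdist s X Y < s" using s
    using power_less_imp_less_base[of "gdist s X Y" 2 s] by simp
  have "sqrt (1 - (gdist s X Y)\<^sup>2 / s\<^sup>2) = W / L" using q W0 L0 by simp
  then show "gam s (gdist s X Y) = EE s X Y"
    by (simp add: gam_def EE_def W_def L_def)
qed

lemma gam_mul:
  assumes s: "s > 0" and x: "0 \<le> x" "x < s"
  shows "gam s x * x = s * sqrt ((gam s x)\<^sup>2 - 1)"
proof -
  have r: "x\<^sup>2/s\<^sup>2 < 1" using s x by (simp add: power_strict_mono)
  define m where "m = 1 - x\<^sup>2/s\<^sup>2"
  have m0: "m > 0" using r by (simp add: m_def)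
  have g2: "(gam s x)\<^sup>2 = 1/m" using m0 by (simp add: gam_def m_def power_divide)
  have "(gam s x)\<^sup>2 - 1 = (gam s x * x / s)\<^sup>2"
  proof -
    have 1: "(gam s x * x / s)\<^sup>2 = x\<^sup>2/s\<^sup>2/m" by (simp add: power_mult_distrib power_divide g2)
    have "1/m - 1 = (1-m)/m" using m0 by (simp add: field_simps)
    then have 2: "1/m - 1 = x\<^sup>2/s\<^sup>2/m" by (simp add: m_def)
    show ?thesis unfolding g2 1 2 ..
  qed
  moreover have "gam s x * x / s \<ge> 0" using s x m0 by (simp add: gam_def m_def[symmetric])
  ultimately have "sqrt ((gam s x)\<^sup>2 - 1) = gam s x * x / s" by (simp only: real_sqrt_abs abs_of_nonneg)
  then show ?thesis using s by simp
qed

lemma gam_mono: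
  assumes s: "s > 0" and "0 \<le> x" "x < y" "y < s"
  shows "gam s x < gam s y"
proof -
  have "x\<^sup>2 < y\<^sup>2" using assms by (simp add: power_strict_mono)
  then have a: "1 - y\<^sup>2/s\<^sup>2 < 1 - x\<^sup>2/s\<^sup>2" using s by (simp add: divide_strict_right_mono)
  have "y\<^sup>2/s\<^sup>2 < 1" using assms by (simp add: power_strict_mono)
  then have b: "0 < 1 - y\<^sup>2/s\<^sup>2" by simp
  have "sqrt (1 - y\<^sup>2/s\<^sup>2) < sqrt (1 - x\<^sup>2/s\<^sup>2)" using a by simp
  then show ?thesis unfolding gam_def using b by (simp add: frac_less2)
qed

lemma core:
  fixes a b g e f t w2 w3 :: real
  assumes a: "a > 0" and g: "g < 0" and w2: "w2 > 0" and w3: "w3 > 0"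
    and w2s: "w2\<^sup>2 = a + 2*b + g" and w3s: "w3\<^sup>2 = a + 2*b*t + g*t\<^sup>2"
    and t1: "t \<noteq> 1" and L1: "e + f > 0" and Lt: "e + f*t > 0"
    and eq: "(e+f)*w3 = (e+f*t)*w2"
    and ext: "e\<^sup>2*(a+2*b+g) > a*(e+f)\<^sup>2"
    and Qp: "a + b*(1+t) + g*t + w2*w3 > 0"
  shows "t > 0"
    and "t*(b\<^sup>2 - a*g) / (a*(a + b*(1+t) + g*t + w2*w3))
         = (e\<^sup>2*(a+2*b+g) - a*(e+f)\<^sup>2) / (2*a*(e+f)\<^sup>2)"
proof -
  define q1 where "q1 = a + 2*b + g"
  define L where "L = e + f"
  define M where "M = g*L\<^sup>2 - q1*f\<^sup>2"
  define N where "N = a*L\<^sup>2 - q1*e\<^sup>2"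
  have q1: "q1 > 0" using w2s w2 q1_def by (metis zero_less_power)
  have sq: "L\<^sup>2 * (a + 2*b*t + g*t\<^sup>2) = (e+f*t)\<^sup>2 * q1"
  proof -
    have "(L*w3)\<^sup>2 = ((e+f*t)*w2)\<^sup>2" using eq by (simp add: L_def)
    then show ?thesis by (simp add: power_mult_distrib w2s w3s q1_def)
  qed
  have fac: "L\<^sup>2 * (a + 2*b*t + g*t\<^sup>2) - (e+f*t)\<^sup>2 * q1 = (t - 1) * (M*t - N)"
    unfolding M_def N_def L_def q1_def by (simp add: power2_eq_square algebra_simps)
  have MN: "M*t = N" using fac sq t1 by simp
  have M0: "M < 0"
  proof -
    have "g*L\<^sup>2 < 0" using g L1 by (simp add: L_def mult_neg_pos)
    moreover have "q1*f\<^sup>2 \<ge> 0" using q1 by simp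
    ultimately show ?thesis by (simp add: M_def)
  qed
  have N0: "N < 0" using ext by (simp add: N_def L_def q1_def mult.commute)
  show tpos: "t > 0" using MN M0 N0
    by (metis mult_neg_neg mult_pos_neg zero_less_mult_iff linorder_neqE_linordered_idom order_less_asym mult_zero_right less_irrefl)
  have L0: "L > 0" using L1 by (simp add: L_def)
  have W: "w2*w3*L = q1*(e+f*t)"
  proof -
    have "w2*w3*L = w2*((e+f*t)*w2)" using eq by (simp add: L_def algebra_simps)
    then show ?thesis by (simp add: power2_eq_square[symmetric] w2s q1_def algebra_simps)
  qed
  define A0 where "A0 = (a+b)*L + q1*e"
  define B0 where "B0 = (b+g)*L + q1*f"
  have id: "2*(b\<^sup>2 - a*g)*L^3 = -M*A0 - N*B0"
    unfolding A0_def B0_def M_def N_def L_def q1_def by (simp add: power2_eq_square power3_eq_cube algebra_simps)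
  have QL: "(a + b*(1+t) + g*t + w2*w3)*L = A0 + t*B0"
    using W unfolding A0_def B0_def by (simp add: algebra_simps)
  have "2*t*(b\<^sup>2 - a*g)*L^3 = -N*(A0 + t*B0)"
  proof -
    have "2*t*(b\<^sup>2 - a*g)*L^3 = t*(2*(b\<^sup>2 - a*g)*L^3)" by simp
    also have "\<dots> = -(M*t)*A0 - t*N*B0" unfolding id by (simp add: algebra_simps)
    finally show ?thesis unfolding MN by (simp add: algebra_simps)
  qed
  then have "2*t*(b\<^sup>2 - a*g)*L^3 = -N*((a + b*(1+t) + g*t + w2*w3)*L)" unfolding QL .
  then have "L * (2*t*(b\<^sup>2 - a*g)*L\<^sup>2) = L * (-N*(a + b*(1+t) + g*t + w2*w3))"
    by (simp add: power2_eq_square power3_eq_cube algebra_simps)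
  then have "L * (2*t*(b\<^sup>2 - a*g)*L\<^sup>2 - (-N*(a + b*(1+t) + g*t + w2*w3))) = 0"
    by (simp only: right_diff_distrib)
  then have key: "2*t*(b\<^sup>2 - a*g)*L\<^sup>2 = -N*(a + b*(1+t) + g*t + w2*w3)" using L0 by simp
  show "t*(b\<^sup>2 - a*g) / (a*(a + b*(1+t) + g*t + w2*w3))
         = (e\<^sup>2*(a+2*b+g) - a*(e+f)\<^sup>2) / (2*a*(e+f)\<^sup>2)"
  proof -
    have rhs: "e\<^sup>2*(a+2*b+g) - a*(e+f)\<^sup>2 = -N" by (simp add: N_def L_def q1_def)
    have d1: "a*(a + b*(1+t) + g*t + w2*w3) \<noteq> 0" using a Qp by simp
    have d2: "2*a*L\<^sup>2 \<noteq> 0" using a L0 by simp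
    have "t*(b\<^sup>2 - a*g) * (2*a*L\<^sup>2) = -N * (a*(a + b*(1+t) + g*t + w2*w3))"
    proof -
      have "t*(b\<^sup>2 - a*g) * (2*a*L\<^sup>2) = a * (2*t*(b\<^sup>2 - a*g)*L\<^sup>2)" by (simp add: algebra_simps)
      also have "\<dots> = a * (-N*(a + b*(1+t) + g*t + w2*w3))" unfolding key ..
      finally show ?thesis by (simp add: algebra_simps)
    qed
    then have "t*(b\<^sup>2 - a*g) / (a*(a + b*(1+t) + g*t + w2*w3)) = -N / (2*a*L\<^sup>2)"
      by (simp only: frac_eq_eq[OF d1 d2])
    then show ?thesis by (simp only: rhs L_def)
  qed
qed

lemma secant:
  fixes C P A2 A3 :: "'a::real_inner"
  assumes s: "s > 0" and C: "norm C < s" and P: "norm P < s" and A2: "norm A2 < s" and A3: "norm A3 < s"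
    and ne: "A2 \<noteq> A3" and ne2: "A2 \<noteq> P" and col: "A3 = P + t *\<^sub>R (A2 - P)"
    and k2: "EE s C A2 = k" and k3: "EE s C A3 = k" and ext: "EE s C P > k"
  shows "gam s (gdist s P A2) * gdist s P A2 * (gam s (gdist s P A3) * gdist s P A3)
           / (gam s (gdist s A2 A3) + 1) = s\<^sup>2 * ((EE s C P)\<^sup>2 - k\<^sup>2) / (2*k\<^sup>2)"
proof -
  define d where "d = A2 - P"
  have A2d: "A2 = P + d" by (simp add: d_def)
  have A3d: "A3 = P + t *\<^sub>R d" using col by (simp add: d_def)
  have d0: "d \<noteq> 0" using ne2 by (simp add: d_def)
  have t1: "t \<noteq> 1" using ne col by auto
  define a where "a = 1 - (P \<bullet> P)/s\<^sup>2"
  define b where "b = - (P \<bullet> d)/s\<^sup>2"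
  define g where "g = - (d \<bullet> d)/s\<^sup>2"
  define e where "e = 1 - (C \<bullet> P)/s\<^sup>2"
  define f where "f = - (C \<bullet> d)/s\<^sup>2"
  define wP where "wP = wf s P"
  define w2 where "w2 = wf s A2"
  define w3 where "w3 = wf s A3"
  define wC where "wC = wf s C"
  have wP0: "wP > 0" and wPs: "wP\<^sup>2 = a" using wf_facts[OF s P] by (auto simp: wP_def a_def)
  have wC0: "wC > 0" using wf_facts[OF s C] by (auto simp: wC_def)
  have w20: "w2 > 0" and w2s': "w2\<^sup>2 = 1 - (A2 \<bullet> A2)/s\<^sup>2" using wf_facts[OF s A2] by (auto simp: w2_def)
  have w30: "w3 > 0" and w3s': "w3\<^sup>2 = 1 - (A3 \<bullet> A3)/s\<^sup>2" using wf_facts[OF s A3] by (auto simp: w3_def)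
  have a0: "a > 0" using wPs wP0 by (metis zero_less_power)
  have g0: "g < 0" using d0 s by (simp add: g_def)
  have w2s: "w2\<^sup>2 = a + 2*b + g" unfolding w2s' A2d a_def b_def g_def
    by (simp add: inner_add_left inner_add_right inner_commute[of d P] diff_divide_distrib add_divide_distrib)
  have w3s: "w3\<^sup>2 = a + 2*b*t + g*t\<^sup>2" unfolding w3s' A3d a_def b_def g_def
    by (simp add: inner_add_left inner_add_right inner_commute[of d P] diff_divide_distrib add_divide_distrib
       power2_eq_square algebra_simps)
  have iPA2: "1 - (P \<bullet> A2)/s\<^sup>2 = a + b" unfolding A2d a_def b_def
    by (simp add: inner_add_right diff_divide_distrib add_divide_distrib)
  have iPA3: "1 - (P \<bullet> A3)/s\<^sup>2 = a + b*t" unfolding A3d a_def b_def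
    by (simp add: inner_add_right diff_divide_distrib add_divide_distrib)
  have iA23: "1 - (A2 \<bullet> A3)/s\<^sup>2 = a + b*(1+t) + g*t" unfolding A2d A3d a_def b_def g_def
    by (simp add: inner_add_left inner_add_right inner_commute[of d P] diff_divide_distrib add_divide_distrib
       algebra_simps)
  have iCA2: "1 - (C \<bullet> A2)/s\<^sup>2 = e + f" unfolding A2d e_def f_def
    by (simp add: inner_add_right diff_divide_distrib add_divide_distrib)
  have iCA3: "1 - (C \<bullet> A3)/s\<^sup>2 = e + f*t" unfolding A3d e_def f_def
    by (simp add: inner_add_right diff_divide_distrib add_divide_distrib)
  have L1: "e + f > 0" using inner_pos[OF s C A2] iCA2 by simp
  have Lt: "e + f*t > 0" using inner_pos[OF s C A3] iCA3 by simp
  have e0: "e > 0" using inner_pos[OF s C P] by (simp add: e_def)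
  have Q0: "a + b*(1+t) + g*t > 0" using inner_pos[OF s A2 A3] iA23 by simp
  have Qp: "a + b*(1+t) + g*t + w2*w3 > 0" using Q0 mult_pos_pos[OF w20 w30] by linarith
  have EC2: "EE s C A2 = (e+f)/(wC*w2)" by (simp add: EE_def iCA2 wC_def w2_def)
  have EC3: "EE s C A3 = (e+f*t)/(wC*w3)" by (simp add: EE_def iCA3 wC_def w3_def)
  have ECP: "EE s C P = e/(wC*wP)" by (simp add: EE_def e_def wC_def wP_def)
  have eq: "(e+f)*w3 = (e+f*t)*w2"
  proof -
    have "(e+f)/(wC*w2) = (e+f*t)/(wC*w3)" using k2 k3 EC2 EC3 by simp
    then have "((e+f)*w3 - (e+f*t)*w2)*wC = 0" using wC0 w20 w30 by (simp add: frac_eq_eq algebra_simps)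
    then show ?thesis using wC0 by simp
  qed
  have ext2: "e\<^sup>2*(a+2*b+g) > a*(e+f)\<^sup>2"
  proof -
    have "(e+f)/(wC*w2) < e/(wC*wP)" using ext k2 EC2 ECP by simp
    then have h0: "(e+f)*(wC*wP) < e*(wC*w2)" using wC0 w20 wP0 by (simp add: field_simps)
    have h: "(e+f)*wP < e*w2"
    proof (rule ccontr)
      assume "\<not> ?thesis"
      then have "e*w2*wC \<le> (e+f)*wP*wC" using wC0 by (simp add: mult_right_mono)
      then show False using h0 by (simp add: algebra_simps)
    qed
    have "((e+f)*wP)\<^sup>2 < (e*w2)\<^sup>2"
      using h L1 wP0 by (intro power_strict_mono) auto
    then show ?thesis by (simp add: power_mult_distrib wPs w2s mult.commute)
  qed
  note cr = core[OF a0 g0 w20 w30 w2s w3s t1 L1 Lt eq ext2 Qp]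
  have tpos: "t > 0" by (rule cr(1))
  have G12: "gam s (gdist s P A2) = (a+b)/(wP*w2)"
    using gdist_facts[OF s P A2] by (simp add: EE_def iPA2 wP_def w2_def)
  have G13: "gam s (gdist s P A3) = (a+b*t)/(wP*w3)"
    using gdist_facts[OF s P A3] by (simp add: EE_def iPA3 wP_def w3_def)
  have G23: "gam s (gdist s A2 A3) = (a + b*(1+t) + g*t)/(w2*w3)"
    using gdist_facts[OF s A2 A3] by (simp add: EE_def iA23 w2_def w3_def)
  have m12: "gam s (gdist s P A2) * gdist s P A2 = s * sqrt ((gam s (gdist s P A2))\<^sup>2 - 1)"
    using gam_mul[OF s _ gdist_facts(1)[OF s P A2]] by (simp add: gdist_def)
  have m13: "gam s (gdist s P A3) * gdist s P A3 = s * sqrt ((gam s (gdist s P A3))\<^sup>2 - 1)"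
    using gam_mul[OF s _ gdist_facts(1)[OF s P A3]] by (simp add: gdist_def)
  define Dl where "Dl = b\<^sup>2 - a*g"
  have Dl0: "Dl > 0" unfolding Dl_def using mult_pos_neg[OF a0 g0] zero_le_power2[of b] by linarith
  have x1: "(gam s (gdist s P A2))\<^sup>2 - 1 = Dl / (a * w2\<^sup>2)"
  proof -
    have "(gam s (gdist s P A2))\<^sup>2 - 1 = ((a+b)\<^sup>2 - a*w2\<^sup>2) / (a * w2\<^sup>2)"
      unfolding G12 using wP0 w20 a0 by (simp add: power_divide power_mult_distrib wPs field_simps)
    then show ?thesis unfolding w2s Dl_def by (simp add: power2_eq_square algebra_simps)
  qed
  have x2: "(gam s (gdist s P A3))\<^sup>2 - 1 = t\<^sup>2 * Dl / (a * w3\<^sup>2)"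
  proof -
    have "(gam s (gdist s P A3))\<^sup>2 - 1 = ((a+b*t)\<^sup>2 - a*w3\<^sup>2) / (a * w3\<^sup>2)"
      unfolding G13 using wP0 w30 a0 by (simp add: power_divide power_mult_distrib wPs field_simps)
    then show ?thesis unfolding w3s Dl_def by (simp add: power2_eq_square algebra_simps)
  qed
  have prod: "sqrt ((gam s (gdist s P A2))\<^sup>2 - 1) * sqrt ((gam s (gdist s P A3))\<^sup>2 - 1)
       = t * Dl / (a * (w2 * w3))"
  proof -
    have "Dl / (a * w2\<^sup>2) * (t\<^sup>2 * Dl / (a * w3\<^sup>2)) = (t * Dl / (a * (w2 * w3)))\<^sup>2"
      by (simp add: power2_eq_square field_simps)
    moreover have "t * Dl / (a * (w2 * w3)) \<ge> 0" using tpos Dl0 a0 w20 w30 by simp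
    ultimately show ?thesis unfolding x1 x2 real_sqrt_mult[symmetric]
      by (simp only: real_sqrt_abs abs_of_nonneg)
  qed
  have den: "gam s (gdist s A2 A3) + 1 = (a + b*(1+t) + g*t + w2*w3)/(w2*w3)"
    unfolding G23 using w20 w30 by (simp add: field_simps)
  have LHS: "gam s (gdist s P A2) * gdist s P A2 * (gam s (gdist s P A3) * gdist s P A3)
           / (gam s (gdist s A2 A3) + 1) = s\<^sup>2 * (t * Dl / (a * (a + b*(1+t) + g*t + w2*w3)))"
  proof -
    have "gam s (gdist s P A2) * gdist s P A2 * (gam s (gdist s P A3) * gdist s P A3)
        = s\<^sup>2 * (t * Dl / (a * (w2 * w3)))"
      unfolding m12 m13 using prod by (simp add: power2_eq_square algebra_simps)
    note E = this
    have W0: "w2*w3 \<noteq> 0" using w20 w30 by simp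
    show ?thesis unfolding den E using W0 Qp a0 by (simp add: field_simps)
  qed
  have RHS: "((EE s C P)\<^sup>2 - k\<^sup>2) / (2*k\<^sup>2) = (e\<^sup>2*(a+2*b+g) - a*(e+f)\<^sup>2) / (2*a*(e+f)\<^sup>2)"
  proof -
    have kk: "k = (e+f)/(wC*w2)" using k2 EC2 by simp
    have "((e/(wC*wP))\<^sup>2 - ((e+f)/(wC*w2))\<^sup>2)/(2*((e+f)/(wC*w2))\<^sup>2)
       = (e\<^sup>2*w2\<^sup>2 - a*(e+f)\<^sup>2) / (2*a*(e+f)\<^sup>2)"
      using wC0 w20 wP0 a0 L1 by (simp add: power_divide power_mult_distrib wPs field_simps)
    then show ?thesis unfolding kk ECP w2s by simp
  qed
  have "s\<^sup>2 * ((EE s C P)\<^sup>2 - k\<^sup>2) / (2*k\<^sup>2) = s\<^sup>2 * (((EE s C P)\<^sup>2 - k\<^sup>2) / (2*k\<^sup>2))"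
    by simp
  then show ?thesis unfolding LHS Dl_def cr(2) RHS by simp
qed

lemma line_col:
  fixes P A B :: "'a::real_inner"
  assumes "gyroline s L" "P \<in> L" "A \<in> L" "B \<in> L" "A \<noteq> P"
  shows "\<exists>t. B = P + t *\<^sub>R (A - P)"
proof -
  obtain a b where L: "L = {a + t *\<^sub>R (b - a) | t. True} \<inter> eball s"
    using assms(1) unfolding gyroline_def by blast
  obtain tp where tp: "P = a + tp *\<^sub>R (b - a)" using assms(2) L by blast
  obtain ta where ta: "A = a + ta *\<^sub>R (b - a)" using assms(3) L by blast
  obtain tb where tb: "B = a + tb *\<^sub>R (b - a)" using assms(4) L by blast
  have ne: "ta - tp \<noteq> 0" using assms(5) ta tp by auto
  have AP: "A - P = (ta - tp) *\<^sub>R (b - a)" by (simp add: ta tp algebra_simps)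
  have "B = P + ((tb - tp)/(ta - tp)) *\<^sub>R (A - P)"
  proof -
    have f1: "((tb - tp)/(ta - tp)) *\<^sub>R ((ta - tp) *\<^sub>R (b - a)) = (tb - tp) *\<^sub>R (b - a)"
      using ne by simp
    have f2: "B = P + (tb - tp) *\<^sub>R (b - a)" by (simp add: tb tp algebra_simps)
    show ?thesis unfolding AP f1 by (rule f2)
  qed
  then show ?thesis by blast
qed

theorem mainTheorem5:
  fixes s r :: real and G :: "(real ^ 'n) set" and C P A2 A3 B2 B3 :: "real ^ 'n"
    and L1 L2 :: "(real ^ 'n) set"
  assumes "CARD('n) \<ge> 2" and "s > 0"
    and "gyroplane s G" and "C \<in> G" and "r > 0"
    and "P \<in> gyrocircle_exterior s G C r"
    and "gyroline s L1" and "P \<in> L1"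
    and "A2 \<noteq> A3" and "A2 \<in> L1 \<inter> gyrocircle s G C r" and "A3 \<in> L1 \<inter> gyrocircle s G C r"
    and "gyroline s L2" and "P \<in> L2"
    and "B2 \<noteq> B3" and "B2 \<in> L2 \<inter> gyrocircle s G C r" and "B3 \<in> L2 \<inter> gyrocircle s G C r"
  shows "gam s (gdist s P A2) * gdist s P A2 * (gam s (gdist s P A3) * gdist s P A3)
           / (gam s (gdist s A2 A3) + 1)
       = gam s (gdist s P B2) * gdist s P B2 * (gam s (gdist s P B3) * gdist s P B3)
           / (gam s (gdist s B2 B3) + 1)"
proof -
  note s = assms(2)
  have Gb: "G \<subseteq> eball s" using assms(3)
    unfolding gyroplane_def gyroplane_through_def by blast
  have inb: "norm X < s" if "X \<in> G" for X using Gb that by (auto simp: eball_def)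
  have C: "norm C < s" using inb assms(4) .
  have P: "norm P < s" "gdist s C P > r" using assms(6) inb by (auto simp: gyrocircle_exterior_def)
  have circ: "norm X < s \<and> EE s C X = gam s r \<and> X \<noteq> P"
    if "X \<in> gyrocircle s G C r" for X
  proof -
    have X: "X \<in> G" "gdist s C X = r" using that by (auto simp: gyrocircle_def)
    have "norm X < s" using inb X(1) .
    moreover have "EE s C X = gam s r" using gdist_facts(2)[OF s C \<open>norm X < s\<close>] X(2) by simp
    moreover have "X \<noteq> P" using X(2) P(2) by auto
    ultimately show ?thesis by blast
  qed
  have ext: "EE s C P > gam s r"
    using gam_mono[OF s _ P(2) gdist_facts(1)[OF s C P(1)]] gdist_facts(2)[OF s C P(1)] assms(5)
    by simp
  have val: "gam s (gdist s P X2) * gdist s P X2 * (gam s (gdist s P X3) * gdist s P X3)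
           / (gam s (gdist s X2 X3) + 1) = s\<^sup>2 * ((EE s C P)\<^sup>2 - (gam s r)\<^sup>2) / (2*(gam s r)\<^sup>2)"
    if L: "gyroline s L" "P \<in> L" and ne: "X2 \<noteq> X3"
      and X2: "X2 \<in> L \<inter> gyrocircle s G C r" and X3: "X3 \<in> L \<inter> gyrocircle s G C r" for L X2 X3
  proof -
    have c2: "norm X2 < s" "EE s C X2 = gam s r" "X2 \<noteq> P" using circ X2 by auto
    have c3: "norm X3 < s" "EE s C X3 = gam s r" using circ X3 by auto
    obtain t where t: "X3 = P + t *\<^sub>R (X2 - P)"
      using line_col[OF L(1) L(2), of X2 X3] X2 X3 c2(3) by blast
    show ?thesis by (rule secant[OF s C P(1) c2(1) c3(1) ne c2(3) t c2(2) c3(2) ext])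
  qed
  show ?thesis
    using val[OF assms(7,8,9,10,11)] val[OF assms(12,13,14,15,16)] by simp
qed

end
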